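(* Let $\mathbf A$ be a finite algebra. Then $\mathbf A\in\mathcal K_{\mathrm{poly}}$ if and only if every subalgebra $\mathbf B$ of $\mathbf A$ (including $\mathbf A$) is in $\mathcal K_{\mathrm{surj}}$.
   Context: Algebras are sets with operations interpreting a purely functional signature. For a finite algebra $\mathbf A$, $c_{\mathbf A}(n)$ is the maximum of $|\mathrm{Hom}(\mathbf X,\mathbf A)|$ over algebras $\mathbf X$ in the signature of $\mathbf A$ with at most $n$ elements, and $c^s_{\mathbf A}(n)$ is the maximum number of surjective homomorphisms $\mathbf X\to\mathbf A$ over such $\mathbf X$. $\mathcal K_{\mathrm{poly}}$ is the class of finite algebras $\mathbf A$ with $c_{\mathbf A}(n)\in O(n^k)$ for some $k$; $\mathcal K_{\mathrm{surj}}$ is the class of finite algebras with $c^s_{\mathbf A}(n)\in O(n^k)$ for some $k$. *)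

theory Defs
  imports Main "HOL-Library.FuncSet" "HOL-Library.Landau_Symbols"
begin

text \<open>A signature is given by an arity function ar on a type 'f of operation symbols.
An algebra is a carrier set together with an interpretation of every symbol as a function
on argument lists; only argument lists of the right length with entries in the carrier matter.\<close>

definition is_alg :: "('f \<Rightarrow> nat) \<Rightarrow> 'a set \<Rightarrow> ('f \<Rightarrow> 'a list \<Rightarrow> 'a) \<Rightarrow> bool" where
  "is_alg ar A F \<longleftrightarrow>
     (\<forall>f xs. length xs = ar f \<and> set xs \<subseteq> A \<longrightarrow> F f xs \<in> A)"

text \<open>Homomorphisms, represented extensionally (undefined outside the carrier),
so that distinct homomorphisms are distinct HOL functions.\<close>
definition homs :: "('f \<Rightarrow> nat) \<Rightarrow> 'b set \<Rightarrow> ('f \<Rightarrow> 'b list \<Rightarrow> 'b)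
                   \<Rightarrow> 'a set \<Rightarrow> ('f \<Rightarrow> 'a list \<Rightarrow> 'a) \<Rightarrow> ('b \<Rightarrow> 'a) set" where
  "homs ar X FX A FA =
     {h. h \<in> X \<rightarrow>\<^sub>E A \<and>
         (\<forall>f xs. length xs = ar f \<and> set xs \<subseteq> X \<longrightarrow> h (FX f xs) = FA f (map h xs))}"

definition surj_homs :: "('f \<Rightarrow> nat) \<Rightarrow> 'b set \<Rightarrow> ('f \<Rightarrow> 'b list \<Rightarrow> 'b)
                   \<Rightarrow> 'a set \<Rightarrow> ('f \<Rightarrow> 'a list \<Rightarrow> 'a) \<Rightarrow> ('b \<Rightarrow> 'a) set" where
  "surj_homs ar X FX A FA = {h \<in> homs ar X FX A FA. h ` X = A}"

text \<open>Every algebra with at most n elements is isomorphic to one whose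
carrier is a finite set of natural numbers, so it suffices to range over those.\<close>
definition hom_count :: "('f \<Rightarrow> nat) \<Rightarrow> 'a set \<Rightarrow> ('f \<Rightarrow> 'a list \<Rightarrow> 'a) \<Rightarrow> nat \<Rightarrow> nat" where
  "hom_count ar A FA n =
     Sup {card (homs ar X FX A FA) | (X :: nat set) FX.
            finite X \<and> card X \<le> n \<and> is_alg ar X FX}"

definition surj_hom_count :: "('f \<Rightarrow> nat) \<Rightarrow> 'a set \<Rightarrow> ('f \<Rightarrow> 'a list \<Rightarrow> 'a) \<Rightarrow> nat \<Rightarrow> nat" where
  "surj_hom_count ar A FA n =
     Sup {card (surj_homs ar X FX A FA) | (X :: nat set) FX.
            finite X \<and> card X \<le> n \<and> is_alg ar X FX}"

definition K_poly :: "('f \<Rightarrow> nat) \<Rightarrow> 'a set \<Rightarrow> ('f \<Rightarrow> 'a list \<Rightarrow> 'a) \<Rightarrow> bool" where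
  "K_poly ar A FA \<longleftrightarrow> finite A \<and> is_alg ar A FA \<and>
     (\<exists>k::nat. (\<lambda>n. real (hom_count ar A FA n)) \<in> O(\<lambda>n. real n ^ k))"

definition K_surj :: "('f \<Rightarrow> nat) \<Rightarrow> 'a set \<Rightarrow> ('f \<Rightarrow> 'a list \<Rightarrow> 'a) \<Rightarrow> bool" where
  "K_surj ar A FA \<longleftrightarrow> finite A \<and> is_alg ar A FA \<and>
     (\<exists>k::nat. (\<lambda>n. real (surj_hom_count ar A FA n)) \<in> O(\<lambda>n. real n ^ k))"

text \<open>Subuniverses: subsets closed under all operations. The subalgebra on B carries the
restriction of the operations of A (FA itself, which is only consulted on lists from B).\<close>
definition subuniverse :: "('f \<Rightarrow> nat) \<Rightarrow> 'a set \<Rightarrow> ('f \<Rightarrow> 'a list \<Rightarrow> 'a) \<Rightarrow> 'a set \<Rightarrow> bool" where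
  "subuniverse ar A FA B \<longleftrightarrow> B \<subseteq> A \<and> is_alg ar B FA"

end

theory Submission
  imports Defs
begin

lemma homs_card_bound:
  assumes "finite X" "finite A"
  shows "card (homs ar X FX A FA) \<le> (card A + 1) ^ card X"
proof -
  have "homs ar X FX A FA \<subseteq> X \<rightarrow>\<^sub>E A" unfolding homs_def by auto
  hence "card (homs ar X FX A FA) \<le> card (X \<rightarrow>\<^sub>E A)"
    by (intro card_mono) (auto intro: finite_PiE assms)
  also have "\<dots> = card A ^ card X" using assms by (simp add: card_PiE)
  also have "\<dots> \<le> (card A + 1) ^ card X" by (intro power_mono) auto
  finally show ?thesis .
qed

lemma surj_homs_sub: "surj_homs ar X FX A FA \<subseteq> homs ar X FX A FA"
  unfolding surj_homs_def by auto

lemma hom_count_upper: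
  fixes X :: "nat set"
  assumes "finite A" "finite X" "card X \<le> n" "is_alg ar X FX"
  shows "card (homs ar X FX A FA) \<le> hom_count ar A FA n"
proof -
  let ?S = "{card (homs ar X FX A FA) | (X :: nat set) FX.
            finite X \<and> card X \<le> n \<and> is_alg ar X FX}"
  have "bdd_above ?S"
  proof (rule bdd_aboveI)
    fix x assume "x \<in> ?S"
    then obtain Y :: "nat set" and FY where "x = card (homs ar Y FY A FA)" "finite Y" "card Y \<le> n" by blast
    then have "x \<le> (card A + 1) ^ card Y" using homs_card_bound[OF \<open>finite Y\<close> assms(1), of ar FY FA] by simp
    also have "\<dots> \<le> (card A + 1) ^ n" by (rule power_increasing[OF \<open>card Y \<le> n\<close>]) simp
    finally show "x \<le> (card A + 1) ^ n" .
  qed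
  moreover have "card (homs ar X FX A FA) \<in> ?S" using assms by blast
  ultimately show ?thesis unfolding hom_count_def by (intro cSup_upper)
qed

lemma surj_hom_count_upper:
  fixes X :: "nat set"
  assumes "finite A" "finite X" "card X \<le> n" "is_alg ar X FX"
  shows "card (surj_homs ar X FX A FA) \<le> surj_hom_count ar A FA n"
proof -
  let ?S = "{card (surj_homs ar X FX A FA) | (X :: nat set) FX.
            finite X \<and> card X \<le> n \<and> is_alg ar X FX}"
  have "bdd_above ?S"
  proof (rule bdd_aboveI)
    fix x assume "x \<in> ?S"
    then obtain Y :: "nat set" and FY where Y: "x = card (surj_homs ar Y FY A FA)" "finite Y" "card Y \<le> n" by blast
    have "finite (homs ar Y FY A FA)"
      by (rule finite_subset[of _ "Y \<rightarrow>\<^sub>E A"]) (auto simp: homs_def intro: finite_PiE Y assms)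
    hence "x \<le> card (homs ar Y FY A FA)" using Y(1) surj_homs_sub by (metis card_mono)
    also have "\<dots> \<le> (card A + 1) ^ card Y" by (rule homs_card_bound[OF Y(2) assms(1)])
    also have "\<dots> \<le> (card A + 1) ^ n" by (rule power_increasing[OF Y(3)]) simp
    finally show "x \<le> (card A + 1) ^ n" .
  qed
  moreover have "card (surj_homs ar X FX A FA) \<in> ?S" using assms by blast
  ultimately show ?thesis unfolding surj_hom_count_def by (intro cSup_upper)
qed

lemma hom_count_least:
  assumes "\<And>(X::nat set) FX. finite X \<Longrightarrow> card X \<le> n \<Longrightarrow> is_alg ar X FX \<Longrightarrow> card (homs ar X FX A FA) \<le> m"
  shows "hom_count ar A FA n \<le> m"
proof -
  let ?S = "{card (homs ar X FX A FA) | (X :: nat set) FX.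
            finite X \<and> card X \<le> n \<and> is_alg ar X FX}"
  show ?thesis
  proof (cases "?S = {}")
    case True then show ?thesis unfolding hom_count_def by (simp only: True Sup_nat_empty)
  next
    case False then show ?thesis unfolding hom_count_def
      by (rule cSup_least) (use assms in blast)
  qed
qed

lemma surj_hom_count_least:
  assumes "\<And>(X::nat set) FX. finite X \<Longrightarrow> card X \<le> n \<Longrightarrow> is_alg ar X FX \<Longrightarrow> card (surj_homs ar X FX A FA) \<le> m"
  shows "surj_hom_count ar A FA n \<le> m"
proof -
  let ?S = "{card (surj_homs ar X FX A FA) | (X :: nat set) FX.
            finite X \<and> card X \<le> n \<and> is_alg ar X FX}"
  show ?thesis
  proof (cases "?S = {}")
    case True then show ?thesis unfolding surj_hom_count_def by (simp only: True Sup_nat_empty)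
  next
    case False then show ?thesis unfolding surj_hom_count_def
      by (rule cSup_least) (use assms in blast)
  qed
qed

lemma bigo_le:
  fixes f g :: "nat \<Rightarrow> nat"
  assumes "\<And>n. f n \<le> g n" "(\<lambda>n. real (g n)) \<in> O(h)"
  shows "(\<lambda>n. real (f n)) \<in> O(h)"
proof -
  have "(\<lambda>n. real (f n)) \<in> O(\<lambda>n. real (g n))"
    by (rule bigoI[where c=1]) (use assms(1) in simp)
  then show ?thesis using assms(2) by (rule landau_o.big_trans)
qed

lemma pow_bigo:
  assumes "k \<le> K"
  shows "(\<lambda>n::nat. real n ^ k) \<in> O(\<lambda>n. real n ^ K)"
proof (rule bigoI[where c=1])
  show "\<forall>\<^sub>F n in at_top. norm (real n ^ k) \<le> 1 * norm (real n ^ K)"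
    using eventually_ge_at_top[of "1::nat"]
    by eventually_elim (use assms in \<open>auto intro: power_increasing\<close>)
qed

lemma map_preimage:
  assumes "set xs \<subseteq> h ` X"
  shows "\<exists>ys. set ys \<subseteq> X \<and> map h ys = xs"
  using assms
proof (induction xs)
  case Nil then show ?case by simp
next
  case (Cons x xs)
  then obtain ys where ys: "set ys \<subseteq> X" "map h ys = xs" by auto
  from Cons.prems obtain y where "y \<in> X" "x = h y" by auto
  then show ?case using ys by (intro exI[of _ "y # ys"]) auto
qed

lemma img_sub:
  assumes "is_alg ar X FX" "h \<in> homs ar X FX A FA"
  shows "subuniverse ar A FA (h ` X)"
  unfolding subuniverse_def is_alg_def
proof (intro conjI allI impI)
  show "h ` X \<subseteq> A" using assms(2) unfolding homs_def by auto
next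
  fix f xs assume xs: "length xs = ar f \<and> set xs \<subseteq> h ` X"
  then obtain ys where ys: "set ys \<subseteq> X" "map h ys = xs" using map_preimage by metis
  have "length ys = ar f" using xs ys by auto
  then have "h (FX f ys) = FA f xs" using assms(2) ys unfolding homs_def by auto
  moreover have "FX f ys \<in> X" using assms(1) ys \<open>length ys = ar f\<close> unfolding is_alg_def by auto
  ultimately show "FA f xs \<in> h ` X" by (metis imageI)
qed

theorem proposition2p1:
  fixes ar :: "'f \<Rightarrow> nat" and A :: "'a set" and FA :: "'f \<Rightarrow> 'a list \<Rightarrow> 'a"
  assumes "finite A" and "is_alg ar A FA"
  shows "K_poly ar A FA \<longleftrightarrow> (\<forall>B. subuniverse ar A FA B \<longrightarrow> K_surj ar B FA)"
proof
  assume KP: "K_poly ar A FA"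
  then obtain k where k: "(\<lambda>n. real (hom_count ar A FA n)) \<in> O(\<lambda>n. real n ^ k)"
    unfolding K_poly_def by blast
  show "\<forall>B. subuniverse ar A FA B \<longrightarrow> K_surj ar B FA"
  proof (intro allI impI)
    fix B assume B: "subuniverse ar A FA B"
    hence Bs: "B \<subseteq> A" "is_alg ar B FA" unfolding subuniverse_def by auto
    have Bf: "finite B" "B \<subseteq> A" "is_alg ar B FA"
      using Bs finite_subset[OF Bs(1) assms(1)] by auto
    have le: "surj_hom_count ar B FA n \<le> hom_count ar A FA n" for n
    proof (rule surj_hom_count_least)
      fix X :: "nat set" and FX
      assume X: "finite X" "card X \<le> n" "is_alg ar X FX"
      have sub: "surj_homs ar X FX B FA \<subseteq> homs ar X FX A FA"
        using Bf(2) unfolding surj_homs_def homs_def by (auto simp: PiE_iff)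
      have "finite (homs ar X FX A FA)"
        by (rule finite_subset[of _ "X \<rightarrow>\<^sub>E A"]) (auto simp: homs_def intro: finite_PiE X assms)
      then have "card (surj_homs ar X FX B FA) \<le> card (homs ar X FX A FA)"
        using sub by (rule card_mono)
      also have "\<dots> \<le> hom_count ar A FA n" by (rule hom_count_upper[OF assms(1) X])
      finally show "card (surj_homs ar X FX B FA) \<le> hom_count ar A FA n" .
    qed
    show "K_surj ar B FA" unfolding K_surj_def
      using Bf bigo_le[OF le k] by blast
  qed
next
  assume H: "\<forall>B. subuniverse ar A FA B \<longrightarrow> K_surj ar B FA"
  define S where "S = {B. subuniverse ar A FA B}"
  have Sfin: "finite S" unfolding S_def subuniverse_def
    by (rule finite_subset[of _ "Pow A"]) (auto simp: assms(1))
  have "\<forall>B\<in>S. \<exists>k::nat. (\<lambda>n. real (surj_hom_count ar B FA n)) \<in> O(\<lambda>n. real n ^ k)"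
    using H unfolding S_def K_surj_def by blast
  then obtain kf where kf0: "\<forall>B\<in>S. (\<lambda>n. real (surj_hom_count ar B FA n)) \<in> O(\<lambda>n. real n ^ kf B)"
    by (rule bchoice[THEN exE])
  have kf: "(\<lambda>n. real (surj_hom_count ar B FA n)) \<in> O(\<lambda>n. real n ^ kf B)" if "B \<in> S" for B
    using kf0 that by (rule bspec)
  define K where "K = Max (insert 0 (kf ` S))"
  have kK: "kf B \<le> K" if "B \<in> S" for B
    unfolding K_def using Sfin that by (intro Max_ge) auto
  have each: "(\<lambda>n. real (surj_hom_count ar B FA n)) \<in> O(\<lambda>n. real n ^ K)" if "B \<in> S" for B
    using kf[OF that] pow_bigo[OF kK[OF that]] by (rule landau_o.big_trans)
  have sumO: "(\<lambda>n. \<Sum>B\<in>S. real (surj_hom_count ar B FA n)) \<in> O(\<lambda>n. real n ^ K)"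
    by (rule big_sum_in_bigo) (rule each)
  have sumO': "(\<lambda>n. real (\<Sum>B\<in>S. surj_hom_count ar B FA n)) \<in> O(\<lambda>n. real n ^ K)"
    using sumO by (simp add: of_nat_sum)
  have le: "hom_count ar A FA n \<le> (\<Sum>B\<in>S. surj_hom_count ar B FA n)" for n
  proof (rule hom_count_least)
    fix X :: "nat set" and FX
    assume X: "finite X" "card X \<le> n" "is_alg ar X FX"
    have sub: "homs ar X FX A FA \<subseteq> (\<Union>B\<in>S. surj_homs ar X FX B FA)"
    proof
      fix h assume h: "h \<in> homs ar X FX A FA"
      have "h ` X \<in> S" unfolding S_def using img_sub[OF X(3) h] by simp
      moreover have "h \<in> surj_homs ar X FX (h ` X) FA"
        using h unfolding surj_homs_def homs_def by (auto simp: PiE_iff)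
      ultimately show "h \<in> (\<Union>B\<in>S. surj_homs ar X FX B FA)" by blast
    qed
    have fin: "finite (surj_homs ar X FX B FA)" if "B \<in> S" for B
    proof -
      have "B \<subseteq> A" using that unfolding S_def subuniverse_def by auto
      then have "finite B" using assms(1) by (rule finite_subset)
      have "surj_homs ar X FX B FA \<subseteq> X \<rightarrow>\<^sub>E B" unfolding surj_homs_def homs_def by blast
      moreover have "finite (X \<rightarrow>\<^sub>E B)" using X(1) \<open>finite B\<close> by (rule finite_PiE)
      ultimately show ?thesis by (rule finite_subset)
    qed
    have "card (homs ar X FX A FA) \<le> card (\<Union>B\<in>S. surj_homs ar X FX B FA)"
      using sub Sfin fin by (intro card_mono) auto
    also have "\<dots> \<le> (\<Sum>B\<in>S. card (surj_homs ar X FX B FA))"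
      by (rule card_UN_le[OF Sfin])
    also have "\<dots> \<le> (\<Sum>B\<in>S. surj_hom_count ar B FA n)"
    proof (rule sum_mono)
      fix B assume "B \<in> S"
      then have "B \<subseteq> A" unfolding S_def subuniverse_def by auto
      then have "finite B" using assms(1) by (rule finite_subset)
      then show "card (surj_homs ar X FX B FA) \<le> surj_hom_count ar B FA n"
        by (rule surj_hom_count_upper[OF _ X])
    qed
    finally show "card (homs ar X FX A FA) \<le> (\<Sum>B\<in>S. surj_hom_count ar B FA n)" .
  qed
  show "K_poly ar A FA" unfolding K_poly_def
    using assms bigo_le[OF le sumO'] by blast
qed

end
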